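(* Let $N\ge 3$, $\Omega=\{x\in\mathbb{R}^N : 1<|x|<3\}$, $\Psi_\alpha(x)=\big||x|-2\big|^\alpha$ for $\alpha>0$, and for $p>2$, $u\in H^1_0(\Omega)\setminus\{0\}$, $$R_{\alpha,p}(u)=\frac{\int_\Omega|\nabla u|^2\,dx}{\left(\int_\Omega \Psi_\alpha |u|^p\,dx\right)^{2/p}},\qquad S_{\alpha,p}=\inf_{u\in H^1_{0}(\Omega)\setminus\{0\}} R_{\alpha,p}(u).$$ Let $p\in(2,2^* )$, where $2^*=2N/(N-2)$. Then there exist $\bar\alpha>0$ and a constant $C>0$ (independent of $\alpha$) such that for all $\alpha\ge\bar\alpha$ $$S_{\alpha,p}\le C\,\alpha^{2-N+\frac{2N}{p}}.$$ *)

theory Defs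
  imports "HOL-Analysis.Analysis"
begin

definition annulus :: "(real^'n) set" where
  "annulus = {x. 1 < norm x \<and> norm x < 3}"

definition Psi :: "real \<Rightarrow> real^'n \<Rightarrow> real" where
  "Psi \<alpha> x = \<bar>norm x - 2\<bar> powr \<alpha>"

text \<open>These form a dense subset of
  \<open>H^1_0(\<Omega>) \ {0}\<close>.\<close>
definition admissible :: "(real^'n) set \<Rightarrow> (real^'n \<Rightarrow> real) \<Rightarrow> (real^'n \<Rightarrow> real^'n) \<Rightarrow> bool" where
  "admissible \<Omega> u g \<longleftrightarrow>
     (\<forall>x. GDERIV u x :> g x) \<and> continuous_on UNIV g \<and>
     compact (closure {x. u x \<noteq> 0}) \<and> closure {x. u x \<noteq> 0} \<subseteq> \<Omega> \<and>
     (\<exists>x. u x \<noteq> 0)"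

definition Rquot :: "(real^'n) set \<Rightarrow> real \<Rightarrow> real \<Rightarrow> (real^'n \<Rightarrow> real) \<Rightarrow> (real^'n \<Rightarrow> real^'n) \<Rightarrow> real" where
  "Rquot \<Omega> \<alpha> p u g =
     (LINT x:\<Omega>|lborel. (norm (g x))\<^sup>2) /
     (LINT x:\<Omega>|lborel. Psi \<alpha> x * \<bar>u x\<bar> powr p) powr (2 / p)"

definition Sap :: "(real^'n) set \<Rightarrow> real \<Rightarrow> real \<Rightarrow> real" where
  "Sap \<Omega> \<alpha> p = Inf {Rquot \<Omega> \<alpha> p u g | u g. admissible \<Omega> u g}"

end

theory Submission imports Defs begin

lemma hderiv: "((\<lambda>t::real. (max 0 (1 - t))^2) has_real_derivative (-2 * max 0 (1 - t))) (at t)"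
proof (cases "t = 1")
  case True
  have "((\<lambda>y. ((max 0 (1 - y))^2 - (max 0 (1 - t))^2) / (y - t)) \<longlongrightarrow> (-2 * max 0 (1 - t))) (at t)"
  proof -
    have e: "\<forall>\<^sub>F y in at t. ((max 0 (1 - y))^2 - (max 0 (1 - t))^2) / (y - t) = min 0 (y - 1)"
      unfolding eventually_at_filter using True
      by (auto simp: power2_eq_square field_simps max_def min_def)
    have "((\<lambda>y. min 0 (y - 1)) \<longlongrightarrow> min 0 (t - 1)) (at t)"
      by (intro tendsto_intros)
    then have "((\<lambda>y. min 0 (y - 1)) \<longlongrightarrow> (-2 * max 0 (1 - t))) (at t)" using True by simp
    then show ?thesis using e by (simp add: tendsto_cong)
  qed
  then show ?thesis by (simp add: has_field_derivative_iff)
next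
  case False
  show ?thesis
  proof (cases "t < 1")
    case True
    have d: "((\<lambda>t::real. (1 - t)^2) has_real_derivative (-2 * max 0 (1 - t))) (at t)"
      using True by (auto intro!: derivative_eq_intros)
    show ?thesis
      by (rule has_field_derivative_transform_within_open[where S="{..<1}" and f="\<lambda>t. (1-t)^2"])
        (use d True in auto)
  next
    case f2: False
    with False have "t > 1" by simp
    have d: "((\<lambda>t::real. 0) has_real_derivative (-2 * max 0 (1 - t))) (at t)"
      using \<open>t>1\<close> by (auto intro!: derivative_eq_intros)
    show ?thesis
      by (rule has_field_derivative_transform_within_open[where S="{1<..}" and f="\<lambda>t. 0"])
        (use d \<open>t>1\<close> in auto)
  qed
qed

lemma qderiv:
  fixes x0 :: "real^'n"
  shows "GDERIV (\<lambda>x. c * ((x - x0) \<bullet> (x - x0))) x :> (2 * c) *\<^sub>R (x - x0)"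
  unfolding gderiv_def
  by (auto intro!: derivative_eq_intros simp: inner_commute algebra_simps)

lemma meas_test:
  fixes u :: "real^'n \<Rightarrow> real" and g :: "real^'n \<Rightarrow> real^'n"
  assumes "continuous_on UNIV u" "continuous_on UNIV g"
  shows "(\<lambda>x. indicator (annulus :: (real^'n) set) x * (Psi a x * \<bar>u x\<bar> powr p)) \<in> borel_measurable lborel"
    "(\<lambda>x. indicator (annulus :: (real^'n) set) x * (norm (g x))\<^sup>2) \<in> borel_measurable lborel"
proof -
  have o: "open (annulus :: (real^'n) set)" unfolding annulus_def
    by (intro open_Collect_conj open_Collect_less continuous_intros)
  have um: "u \<in> borel_measurable borel" using assms(1) by (rule borel_measurable_continuous_onI)
  have gm: "g \<in> borel_measurable borel" using assms(2) by (rule borel_measurable_continuous_onI)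
  show "(\<lambda>x. indicator (annulus :: (real^'n) set) x * (Psi a x * \<bar>u x\<bar> powr p)) \<in> borel_measurable lborel"
    unfolding Psi_def using borel_open[OF o] um by measurable
  show "(\<lambda>x. indicator (annulus :: (real^'n) set) x * (norm (g x))\<^sup>2) \<in> borel_measurable lborel"
    using borel_open[OF o] gm by measurable
qed

lemma meas_cball_cart: "r \<ge> 0 \<Longrightarrow> measure lborel (cball (c::real^'n) r) = unit_ball_vol (CARD('n)) * r ^ CARD('n)"
  using content_cball[of r c] by simp

lemma meas_ball_cart: "r \<ge> 0 \<Longrightarrow> measure lborel (ball (c::real^'n) r) = unit_ball_vol (CARD('n)) * r ^ CARD('n)"
  using content_ball[of r c] by simp


lemma alg:
  fixes a c1 V p :: real and N :: nat
  assumes a: "a > 0" and c: "c1 > 0" and p: "p > 0"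
  shows "16 / (1/a)^2 * (V * (1/a)^N) / (c1 * (1/a)^N) powr (2/p)
       = 16 * V / c1 powr (2/p) * a powr (2 - real N + 2 * real N / p)"
proof -
  have e1: "(1/a)^N = 1 / a powr real N" using a by (simp add: powr_realpow power_one_over)
  have e2: "(1/a)^2 = 1 / a powr 2" using a by (simp add: powr_realpow power_one_over)
  have e3: "(c1 * (1 / a powr real N)) powr (2/p) = c1 powr (2/p) / a powr (real N * (2/p))"
    using a c by (simp add: powr_mult powr_divide powr_powr)
  have e4: "a powr (2 - real N + 2 * real N / p) = a powr 2 / a powr real N * a powr (real N * (2/p))"
  proof -
    have "a powr (2 - real N + 2 * real N / p) = a powr ((2 + real N * (2/p)) - real N)"
      by (rule arg_cong[where f="(powr) a"]) (simp add: algebra_simps)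
    also have "\<dots> = a powr (2 + real N * (2/p)) / a powr real N" by (rule powr_diff)
    also have "\<dots> = a powr 2 / a powr real N * a powr (real N * (2/p))" by (simp add: powr_add)
    finally show ?thesis .
  qed
  show ?thesis unfolding e1 e2 e3 e4 using a c by (simp add: field_simps)
qed

theorem lemma2p3:
  fixes p :: real
  assumes "CARD('n::finite) \<ge> 3"
    and "2 < p"
    and "p < 2 * real CARD('n) / (real CARD('n) - 2)"
  shows "\<exists>\<alpha>0 > 0. \<exists>C > 0. \<forall>\<alpha> \<ge> \<alpha>0.
           Sap (annulus :: (real^'n) set) \<alpha> p
             \<le> C * \<alpha> powr (2 - real CARD('n) + 2 * real CARD('n) / p)"
proof -
  define N where "N = CARD('n)"
  define V where "V = unit_ball_vol (real N)"
  have Vpos: "V > 0" unfolding V_def by simp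
  define c1 where "c1 = exp (-5) * (1/2) powr p * V * (1/2)^N"
  have c1pos: "c1 > 0" unfolding c1_def using Vpos by simp
  define C where "C = 16 * V / c1 powr (2/p)"
  have Cpos: "C > 0" unfolding C_def using Vpos c1pos by simp
  have p0: "p > 0" using assms by simp
  have main: "Sap (annulus :: (real^'n) set) \<alpha> p \<le> C * \<alpha> powr (2 - real N + 2 * real N / p)"
    if al: "\<alpha> \<ge> 12" for \<alpha> :: real
  proof -
    define r where "r = 1 / \<alpha>"
    have r0: "r > 0" and r12: "r \<le> 1/12" and ar: "\<alpha> * r = 1" using al by (auto simp: r_def)
    obtain e :: "real^'n" where e: "norm e = 1" using vector_choose_size[of 1] by auto
    define x0 where "x0 = (3 - 2*r) *\<^sub>R e"
    have nx0: "norm x0 = 3 - 2*r" unfolding x0_def using e r12 by simp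
    define q where "q x = (1/r^2) * ((x - x0) \<bullet> (x - x0))" for x
    define u where "u x = (max 0 (1 - q x))^2" for x
    define g where "g x = (-2 * max 0 (1 - q x)) *\<^sub>R ((2 * (1/r^2)) *\<^sub>R (x - x0))" for x
    have qd: "q x = (dist x x0 / r)^2" for x
      unfolding q_def dist_norm by (simp add: power2_norm_eq_inner[symmetric] power_divide)
    have deriv: "GDERIV u x :> g x" for x
      unfolding u_def g_def q_def
      by (rule GDERIV_DERIV_compose[OF qderiv hderiv])
    have contg: "continuous_on UNIV g" unfolding g_def q_def by (intro continuous_intros)
    have contu: "continuous_on UNIV u" unfolding u_def q_def by (intro continuous_intros)
    have q1: "q x < 1 \<longleftrightarrow> dist x x0 < r" for x
    proof -
      have "q x < 1 \<longleftrightarrow> dist x x0 / r < 1" unfolding qd using r0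
        by (metis abs_of_nonneg divide_nonneg_pos power_less_one_iff zero_le_dist abs_power2 
           less_eq_real_def one_less_power pos2 power2_less_imp_less)
      also have "\<dots> \<longleftrightarrow> dist x x0 < r" using r0 by simp
      finally show ?thesis .
    qed
    have u0: "u x \<noteq> 0 \<longleftrightarrow> q x < 1" for x unfolding u_def by (auto simp: max_def)
    have supp: "{x. u x \<noteq> 0} = ball x0 r"
      using q1 u0 by (auto simp: dist_commute)
    have cb_ann: "cball x0 r \<subseteq> annulus"
    proof
      fix x assume "x \<in> cball x0 r"
      then have d: "norm (x - x0) \<le> r" by (simp add: dist_norm norm_minus_commute)
      have "norm x \<le> norm x0 + norm (x - x0)" by (metis norm_triangle_sub add.commute)
      moreover have "norm x0 \<le> norm x + norm (x - x0)" by (metis norm_minus_commute norm_triangle_sub add.commute)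
      ultimately show "x \<in> annulus" unfolding annulus_def using d nx0 r12 r0 by auto
    qed
    have adm: "admissible annulus u g"
      unfolding admissible_def supp using deriv contg cb_ann r0
      by (auto intro!: exI[of _ x0] simp: u_def q_def)

    have R_nonneg: "Rquot (annulus :: (real^'n) set) \<alpha> p v h \<ge> 0" for v h
      unfolding Rquot_def set_lebesgue_integral_def
      by (intro divide_nonneg_nonneg Bochner_Integration.integral_nonneg) auto
    have bdd: "bdd_below {Rquot (annulus :: (real^'n) set) \<alpha> p u g | u g. admissible annulus u g}"
      by (rule bdd_belowI[of _ 0]) (auto intro: R_nonneg)
    have S_le: "Sap (annulus :: (real^'n) set) \<alpha> p \<le> Rquot annulus \<alpha> p u g"
    proof -
      have mem: "Rquot annulus \<alpha> p u g \<in> {Rquot (annulus :: (real^'n) set) \<alpha> p u g | u g. admissible annulus u g}"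
        using adm by blast
      show ?thesis unfolding Sap_def by (rule cInf_lower[OF mem bdd])
    qed
    define NU where "NU = integral\<^sup>L lborel (\<lambda>x. indicator (annulus :: (real^'n) set) x * (norm (g x))\<^sup>2)"
    define DE where "DE = integral\<^sup>L lborel (\<lambda>x. indicator (annulus :: (real^'n) set) x * (Psi \<alpha> x * \<bar>u x\<bar> powr p))"
    have Rq: "Rquot annulus \<alpha> p u g = NU / DE powr (2/p)"
      unfolding Rquot_def set_lebesgue_integral_def NU_def DE_def by simp
    have qnn: "q x \<ge> 0" for x unfolding qd by simp
    have qout: "x \<notin> cball x0 r \<Longrightarrow> q x \<ge> 1" for x using q1[of x] by (auto simp: dist_commute)
    have gout: "x \<notin> cball x0 r \<Longrightarrow> g x = 0" for x using qout[of x] by (simp add: g_def)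
    have uout: "x \<notin> cball x0 r \<Longrightarrow> u x = 0" for x using qout[of x] by (simp add: u_def)
    have gbound: "norm (g x) \<le> 4 / r" if "x \<in> cball x0 r" for x
    proof -
      have d: "norm (x - x0) \<le> r" using that by (simp add: dist_norm norm_minus_commute)
      have m: "max 0 (1 - q x) \<le> 1" "max 0 (1 - q x) \<ge> 0" using qnn[of x] by auto
      have "norm (g x) = 2 * max 0 (1 - q x) * (2 / r^2) * norm (x - x0)"
        unfolding g_def using r0 by simp
      also have "\<dots> \<le> 2 * 1 * (2 / r^2) * r"
        using m d r0 by (intro mult_mono) auto
      also have "\<dots> = 4 / r" using r0 by (simp add: power2_eq_square field_simps)
      finally show ?thesis .
    qed
    have NUle: "NU \<le> 16 / r^2 * (V * r^N)"
    proof -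
      have "NU \<le> integral\<^sup>L lborel (\<lambda>x. (16 / r^2) * indicator (cball x0 r) x)"
        unfolding NU_def
      proof (rule integral_mono')
        show "integrable lborel (\<lambda>x. (16 / r^2) * indicator (cball x0 r) x)"
          by (intro integrable_mult_right integrable_real_indicator emeasure_lborel_cball_finite) auto
      next
        fix x :: "real^'n"
        show "0 \<le> (16 / r^2) * indicator (cball x0 r) x" by simp
        show "indicator (annulus :: (real^'n) set) x * (norm (g x))\<^sup>2 \<le> (16 / r^2) * indicator (cball x0 r) x"
        proof (cases "x \<in> cball x0 r")
          case True
          then have "x \<in> annulus" using cb_ann by auto
          moreover have "(norm (g x))\<^sup>2 \<le> (4/r)^2"
            using gbound[OF True] by (intro power_mono) auto
          ultimately show ?thesis using True by (simp add: power_divide)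
        qed (simp add: gout)
      qed
      also have "\<dots> = 16 / r^2 * (V * r^N)"
        using meas_cball_cart[of r x0] r0 by (simp add: V_def N_def)
      finally show ?thesis .
    qed
    have Psi_le: "Psi \<alpha> x \<le> 1" if "x \<in> annulus" for x
    proof -
      have "\<bar>norm x - 2\<bar> \<le> 1" using that unfolding annulus_def by auto
      then have "\<bar>norm x - 2\<bar> powr \<alpha> \<le> 1 powr \<alpha>" using al by (intro powr_mono2) auto
      then show ?thesis unfolding Psi_def by simp
    qed
    have u_le: "\<bar>u x\<bar> powr p \<le> 1" for x
    proof -
      have "\<bar>u x\<bar> \<le> 1" unfolding u_def using qnn[of x]
        by (auto simp: max_def power_le_one_iff abs_le_iff intro!: power_le_one)
      then have "\<bar>u x\<bar> powr p \<le> 1 powr p" using p0 by (intro powr_mono2) auto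
      then show ?thesis by simp
    qed
    have Psi_nn: "Psi \<alpha> x \<ge> 0" for x unfolding Psi_def by simp
    have Dint: "integrable lborel (\<lambda>x. indicator (annulus :: (real^'n) set) x * (Psi \<alpha> x * \<bar>u x\<bar> powr p))"
    proof (rule Bochner_Integration.integrable_bound)
      show "integrable lborel (indicator (cball x0 r) :: real^'n \<Rightarrow> real)"
        by (intro integrable_real_indicator emeasure_lborel_cball_finite) auto
      show "(\<lambda>x. indicator (annulus :: (real^'n) set) x * (Psi \<alpha> x * \<bar>u x\<bar> powr p)) \<in> borel_measurable lborel"
        by (rule meas_test(1)[OF contu contg])
      show "AE x in lborel. norm (indicator (annulus :: (real^'n) set) x * (Psi \<alpha> x * \<bar>u x\<bar> powr p))
              \<le> norm (indicator (cball x0 r) x :: real)"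
      proof (rule AE_I2)
        fix x :: "real^'n"
        show "norm (indicator (annulus :: (real^'n) set) x * (Psi \<alpha> x * \<bar>u x\<bar> powr p)) \<le> norm (indicator (cball x0 r) x :: real)"
        proof (cases "x \<in> cball x0 r")
          case True
          then have a: "x \<in> annulus" using cb_ann by auto
          have "Psi \<alpha> x * \<bar>u x\<bar> powr p \<le> 1 * 1"
            using Psi_le[OF a] u_le[of x] Psi_nn[of x] by (intro mult_mono) auto
          then show ?thesis using a True Psi_nn[of x] by simp
        qed (simp add: uout)
      qed
    qed
    have Psi_ge: "Psi \<alpha> x \<ge> exp (-5)" if "x \<in> cball x0 r" for x
    proof -
      have d: "norm (x - x0) \<le> r" using that by (simp add: dist_norm norm_minus_commute)
      have "norm x0 \<le> norm x + norm (x - x0)" by (metis norm_minus_commute norm_triangle_sub add.commute)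
      then have nb: "norm x - 2 \<ge> 1 - 3*r" using d nx0 by auto
      have pos: "1 - 3*r > 0" using r12 by simp
      have A: "Psi \<alpha> x \<ge> (1 - 3*r) powr \<alpha>"
        unfolding Psi_def using nb pos al by (intro powr_mono2) auto
      have B: "(1 - 3*r) powr \<alpha> = exp (\<alpha> * ln (1 - 3*r))"
        using pos by (simp add: powr_def)
      have "ln (1 - 3*r) \<ge> - (3*r) - 2 * (3*r)^2"
        using ln_one_minus_pos_lower_bound[of "3*r"] r0 r12 by simp
      then have D: "\<alpha> * ln (1 - 3*r) \<ge> \<alpha> * (- (3*r) - 2 * (3*r)^2)"
        using al by (intro mult_left_mono) auto
      have E: "\<alpha> * (- (3*r) - 2 * (3*r)^2) = -3 - 18 * r"
      proof -
        have "\<alpha> * (- (3*r) - 2 * (3*r)^2) = -3*(\<alpha>*r) - 18*(\<alpha>*r)*r"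
          by (simp add: power2_eq_square algebra_simps)
        then show ?thesis using ar by simp
      qed
      have "exp (-5) \<le> exp (\<alpha> * ln (1 - 3*r))"
        unfolding exp_le_cancel_iff using D E r12 by linarith
      then show ?thesis using A B by linarith
    qed
    have DEge: "DE \<ge> exp (-5) * (1/2) powr p * (V * (r/2)^N)"
    proof -
      have "integral\<^sup>L lborel (\<lambda>x. (exp (-5) * (1/2) powr p) * indicator (ball x0 (r/2)) x) \<le> DE"
        unfolding DE_def
      proof (rule integral_mono'[OF Dint])
        fix x :: "real^'n"
        show "0 \<le> indicator (annulus :: (real^'n) set) x * (Psi \<alpha> x * \<bar>u x\<bar> powr p)"
          using Psi_nn[of x] by simp
        show "exp (-5) * (1/2) powr p * indicator (ball x0 (r/2)) x
              \<le> indicator (annulus :: (real^'n) set) x * (Psi \<alpha> x * \<bar>u x\<bar> powr p)"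
        proof (cases "x \<in> ball x0 (r/2)")
          case True
          then have cb: "x \<in> cball x0 r" using r0 by auto
          then have a: "x \<in> annulus" using cb_ann by auto
          have "dist x x0 / r < 1/2" using True r0 by (simp add: dist_commute field_simps)
          then have "(dist x x0 / r)^2 < (1/2)^2" using r0 by (intro power_strict_mono) auto
          then have "q x < 1/4" unfolding qd by (simp add: power2_eq_square)
          then have h: "3/4 \<le> 1 - q x" by simp
          have "(3/4)^2 \<le> (1 - q x)^2" using h by (intro power_mono) auto
          then have "u x \<ge> 1/2" unfolding u_def using h by (simp add: max_def power2_eq_square)
          then have "\<bar>u x\<bar> powr p \<ge> (1/2) powr p" using p0 by (intro powr_mono2) auto
          moreover have "Psi \<alpha> x \<ge> exp (-5)" by (rule Psi_ge[OF cb])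
          ultimately have "exp (-5) * (1/2) powr p \<le> Psi \<alpha> x * \<bar>u x\<bar> powr p"
            using Psi_nn[of x] by (intro mult_mono) auto
          then show ?thesis using True a by simp
        qed (use Psi_nn[of x] in simp)
      qed
      moreover have "integral\<^sup>L lborel (\<lambda>x. (exp (-5) * (1/2) powr p) * indicator (ball x0 (r/2)) x)
          = exp (-5) * (1/2) powr p * (V * (r/2)^N)"
        using meas_ball_cart[of "r/2" x0] r0 by (simp add: V_def N_def)
      ultimately show ?thesis by simp
    qed
    have c1r: "exp (-5) * (1/2) powr p * (V * (r/2)^N) = c1 * r^N"
      unfolding c1_def by (simp add: power_divide field_simps)
    have c1rpos: "c1 * r^N > 0" using c1pos r0 by simp
    have "Sap (annulus :: (real^'n) set) \<alpha> p \<le> NU / DE powr (2/p)" using S_le Rq by simp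
    also have "\<dots> \<le> (16 / r^2 * (V * r^N)) / (c1 * r^N) powr (2/p)"
    proof (rule frac_le)
      show "0 \<le> 16 / r^2 * (V * r^N)" using Vpos r0 by simp
      show "NU \<le> 16 / r^2 * (V * r^N)" by (rule NUle)
      show "0 < (c1 * r^N) powr (2/p)" using c1rpos c1pos r0 by simp
      show "(c1 * r^N) powr (2/p) \<le> DE powr (2/p)"
        using DEge c1r c1rpos p0 by (intro powr_mono2) auto
    qed
    also have "\<dots> = C * \<alpha> powr (2 - real N + 2 * real N / p)"
      unfolding r_def C_def using alg[of \<alpha> c1 p V N] al c1pos p0 by simp
    finally show ?thesis .
  qed
  show ?thesis
    apply (rule exI[of _ 12], simp)
    apply (rule exI[of _ C])
    using Cpos main N_def by auto
qed

end
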